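(* For every integer $k\ge 1$, the complete graph $K_{2k+1}$ has a quasi-majority neighbor sum distinguishing $3$-edge-coloring in which exactly $k$ vertices are each incident to $k-1$ edges of color $2$ and the remaining $k+1$ vertices are each incident to $k$ edges of color $2$.
   Context: A $3$-edge-coloring of $G$ is any map $c:E(G)\to\{1,2,3\}$ (adjacent edges may share colors). It induces $\sigma_c(v)=\sum_{u\in N(v)}c(vu)$. The coloring is neighbor sum distinguishing if $\sigma_c(u)\ne\sigma_c(v)$ for every edge $uv$, and quasi-majority if every vertex $v$ is incident to at most $\lceil d(v)/2\rceil$ edges of each single color. *)

theory Defs
  imports Main
begin

definition complete_edges :: "'a set \<Rightarrow> 'a set set" where
  "complete_edges V = {{u, v} | u v. u \<in> V \<and> v \<in> V \<and> u \<noteq> v}"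

definition nbrs :: "'a set set \<Rightarrow> 'a \<Rightarrow> 'a set" where
  "nbrs E v = {u. {v, u} \<in> E}"

definition degree :: "'a set set \<Rightarrow> 'a \<Rightarrow> nat" where
  "degree E v = card (nbrs E v)"

definition is_3_edge_coloring :: "'a set set \<Rightarrow> ('a set \<Rightarrow> nat) \<Rightarrow> bool" where
  "is_3_edge_coloring E c \<longleftrightarrow> (\<forall>e\<in>E. c e \<in> {1, 2, 3})"

definition sigma :: "'a set set \<Rightarrow> ('a set \<Rightarrow> nat) \<Rightarrow> 'a \<Rightarrow> nat" where
  "sigma E c v = (\<Sum>u\<in>nbrs E v. c {v, u})"

definition color_deg :: "'a set set \<Rightarrow> ('a set \<Rightarrow> nat) \<Rightarrow> nat \<Rightarrow> 'a \<Rightarrow> nat" where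
  "color_deg E c i v = card {u \<in> nbrs E v. c {v, u} = i}"

definition nsd :: "'a set set \<Rightarrow> ('a set \<Rightarrow> nat) \<Rightarrow> bool" where
  "nsd E c \<longleftrightarrow> (\<forall>u v. {u, v} \<in> E \<longrightarrow> sigma E c u \<noteq> sigma E c v)"

definition quasi_majority :: "'a set \<Rightarrow> 'a set set \<Rightarrow> ('a set \<Rightarrow> nat) \<Rightarrow> bool" where
  "quasi_majority V E c \<longleftrightarrow>
     (\<forall>v\<in>V. \<forall>i\<in>{1,2,3::nat}. 2 * color_deg E c i v \<le> degree E v + 1)"

end

theory Submission
  imports Defs
begin

definition G :: "nat \<Rightarrow> nat \<Rightarrow> nat" where
  "G k s = (if even s then 2 else if s < 2*k then 1 else 3)"

lemma G_range: "G k s \<in> {1,2,3}" by (simp add: G_def)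
lemma G1: "odd s \<Longrightarrow> s < 2*k \<Longrightarrow> G k s = 1" by (simp add: G_def)
lemma G3: "odd s \<Longrightarrow> \<not> s < 2*k \<Longrightarrow> G k s = 3" by (simp add: G_def)
lemma G2: "(G k s = 2) = even s" by (simp add: G_def)

lemma edge_mem:
  fixes v u n :: nat
  assumes "v < n"
  shows "{v,u} \<in> complete_edges {0..<n} \<longleftrightarrow> u < n \<and> u \<noteq> v"
proof
  assume "{v,u} \<in> complete_edges {0..<n}"
  then have "\<exists>a b. {v,u} = {a,b} \<and> a \<in> {0..<n} \<and> b \<in> {0..<n} \<and> a \<noteq> b"
    unfolding complete_edges_def mem_Collect_eq .
  then obtain a b where ab: "{v,u} = {a,b}" "a < n" "b < n" "a \<noteq> b"
    by auto
  from ab(1) have "(v = a \<and> u = b) \<or> (v = b \<and> u = a)" by (simp add: doubleton_eq_iff)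
  then show "u < n \<and> u \<noteq> v" using ab(2-4) by (elim disjE) auto
next
  assume h: "u < n \<and> u \<noteq> v"
  have "\<exists>a b. {v,u} = {a,b} \<and> a \<in> {0..<n} \<and> b \<in> {0..<n} \<and> a \<noteq> b"
    apply (rule exI[of _ v], rule exI[of _ u])
    using assms h by auto
  then show "{v,u} \<in> complete_edges {0..<n}" unfolding complete_edges_def mem_Collect_eq .
qed

lemma nbrs_complete:
  fixes v n :: nat
  assumes "v < n"
  shows "nbrs (complete_edges {0..<n}) v = {0..<n} - {v}"
proof (rule set_eqI)
  fix u
  show "u \<in> nbrs (complete_edges {0..<n}) v \<longleftrightarrow> u \<in> {0..<n} - {v}"
    unfolding nbrs_def mem_Collect_eq edge_mem[OF assms] by simp
qed

lemma T_step:
  "(\<Sum>u<Suc n. G k (u+v)) = G k v + (\<Sum>u<n. G k (u+Suc v))"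
  by (subst sum.lessThan_Suc_shift) simp

lemma T0: "m \<le> k \<Longrightarrow> (\<Sum>u<2*m+1. G k u) = 3*m+2"
proof (induction m)
  case 0 then show ?case using G2[of k 0] by simp
next
  case (Suc m)
  have e: "2 * Suc m + 1 = Suc (Suc (2*m+1))" by simp
  have "(\<Sum>u<2 * Suc m + 1. G k u) = (\<Sum>u<2*m+1. G k u) + G k (2*m+1) + G k (2*m+2)"
    unfolding e by simp
  also have "G k (2*m+1) = 1" using Suc.prems by (intro G1) auto
  also have "G k (2*m+2) = 2" by (simp add: G2)
  finally show ?case using Suc by simp
qed

lemma T: "v \<le> 2*k \<Longrightarrow> (\<Sum>u<2*k+1. G k (u+v)) = 3*k+2+v"
proof (induction v)
  case 0 then show ?case using T0[of k k] by simp
next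
  case (Suc v)
  have a: "(\<Sum>u<Suc (2*k+1). G k (u+v)) = (\<Sum>u<2*k+1. G k (u+v)) + G k (2*k+1+v)"
    by simp
  have b: "(\<Sum>u<Suc (2*k+1). G k (u+v)) = G k v + (\<Sum>u<2*k+1. G k (u+Suc v))"
    by (rule T_step)
  have c: "G k (2*k+1+v) = G k v + 1"
  proof (cases "even v")
    case True
    then have "G k v = 2" by (simp add: G2)
    moreover have "G k (2*k+1+v) = 3" using True by (intro G3) auto
    ultimately show ?thesis by simp
  next
    case False
    then have "G k v = 1" using Suc.prems by (intro G1) auto
    moreover have "G k (2*k+1+v) = 2" using False by (simp add: G2)
    ultimately show ?thesis by simp
  qed
  show ?case using a b c Suc by simp
qed

lemma card_even: "card {u\<in>{0..<2*m+1}. even u} = m+1"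
proof -
  have "{u\<in>{0..<2*m+1}. even u} = (\<lambda>i. 2*i) ` {..m}"
    by (auto elim!: evenE)
  then show ?thesis by (simp add: card_image inj_on_def)
qed

lemma card_odd: "card {u\<in>{0..<2*m+1}. odd u} = m"
proof -
  have "{u\<in>{0..<2*m+1}. odd u} = (\<lambda>i. 2*i+1) ` {..<m}"
    by (auto elim!: oddE)
  then show ?thesis by (simp add: card_image inj_on_def)
qed


lemma sum2: "u \<noteq> v \<Longrightarrow> \<Sum>{v,u} = v + (u::nat)" by simp

lemma cd_eq:
  assumes "v < 2*k+1"
  shows "color_deg (complete_edges {0..<2*k+1}) (\<lambda>e. G k (\<Sum>e)) i v
       = card {u\<in>{0..<2*k+1} - {v}. G k (v+u) = i}"
  unfolding color_deg_def nbrs_complete[OF assms]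
  by (rule arg_cong[where f=card]) auto

lemma sigma_eq:
  assumes "v < 2*k+1"
  shows "sigma (complete_edges {0..<2*k+1}) (\<lambda>e. G k (\<Sum>e)) v = 3*k+v"
proof -
  have "sigma (complete_edges {0..<2*k+1}) (\<lambda>e. G k (\<Sum>e)) v
      = (\<Sum>u\<in>{0..<2*k+1} - {v}. G k (u+v))"
    unfolding sigma_def nbrs_complete[OF assms]
    by (rule sum.cong) (auto simp: add.commute)
  moreover have "(\<Sum>u\<in>{0..<2*k+1}. G k (u+v)) = G k (v+v) + (\<Sum>u\<in>{0..<2*k+1} - {v}. G k (u+v))"
    using assms by (subst sum.remove[of _ v]) auto
  moreover have "G k (v+v) = 2" using G2[of k "v+v"] by simp
  moreover have "(\<Sum>u\<in>{0..<2*k+1}. G k (u+v)) = 3*k+2+v"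
    using T[of v k] assms by (simp add: lessThan_atLeast0)
  ultimately show ?thesis by simp
qed

lemma edge_iff: "{u,v} \<in> complete_edges V \<Longrightarrow> u \<in> V \<and> v \<in> V \<and> u \<noteq> v"
  unfolding complete_edges_def by (auto simp: doubleton_eq_iff)

theorem mainTheorem18:
  fixes k :: nat
  assumes "k \<ge> 1"
  shows "\<exists>c :: nat set \<Rightarrow> nat.
    is_3_edge_coloring (complete_edges {0..<2*k+1}) c \<and>
    nsd (complete_edges {0..<2*k+1}) c \<and>
    quasi_majority {0..<2*k+1} (complete_edges {0..<2*k+1}) c \<and>
    (\<exists>S \<subseteq> {0..<2*k+1}. card S = k \<and>
       (\<forall>v\<in>S. color_deg (complete_edges {0..<2*k+1}) c 2 v = k - 1) \<and>
       (\<forall>v\<in>{0..<2*k+1} - S. color_deg (complete_edges {0..<2*k+1}) c 2 v = k))"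
proof -
  let ?c = "\<lambda>e. G k (\<Sum>e)"
  let ?V = "{0..<2*k+1}"
  let ?E = "complete_edges ?V"
  have h1: "is_3_edge_coloring ?E ?c"
    unfolding is_3_edge_coloring_def by (intro ballI G_range)
  have h2: "nsd ?E ?c"
    unfolding nsd_def
  proof (intro allI impI)
    fix u v assume "{u,v} \<in> ?E"
    then have "u \<in> ?V \<and> v \<in> ?V \<and> u \<noteq> v" by (rule edge_iff)
    then have uv: "u < 2*k+1" "v < 2*k+1" "u \<noteq> v" by auto
    show "sigma ?E ?c u \<noteq> sigma ?E ?c v"
      unfolding sigma_eq[OF uv(1)] sigma_eq[OF uv(2)] using uv(3) by simp
  qed
  have c2: "color_deg ?E ?c 2 v = (if odd v then k - 1 else k)" if v: "v < 2*k+1" for v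
  proof (cases "odd v")
    case True
    have "\<forall>u. (G k (v+u) = 2) = odd u" using True by (simp add: G2)
    then have "{u\<in>?V - {v}. G k (v+u) = 2} = {u\<in>?V. odd u} - {v}"
      by blast
    then show ?thesis using True v card_odd[of k] cd_eq[OF v]
      by (simp add: card_Diff_singleton)
  next
    case False
    have "\<forall>u. (G k (v+u) = 2) = even u" using False by (simp add: G2)
    then have "{u\<in>?V - {v}. G k (v+u) = 2} = {u\<in>?V. even u} - {v}"
      by blast
    then show ?thesis using False v card_even[of k] cd_eq[OF v]
      by (simp add: card_Diff_singleton)
  qed
  have deg: "degree ?E v = 2*k" if v: "v < 2*k+1" for v
    unfolding degree_def nbrs_complete[OF v] using v by simp
  have c13: "color_deg ?E ?c i v \<le> k" if v: "v < 2*k+1" and i: "i = 1 \<or> i = 3" for v i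
  proof (cases "odd v")
    case True
    define w where "w = (if i = 1 then 2*k else 0)"
    have "{u\<in>?V - {v}. G k (v+u) = i} \<subseteq> {u\<in>?V. even u} - {w}"
    proof
      fix u assume u: "u \<in> {u\<in>?V - {v}. G k (v+u) = i}"
      then have g: "G k (v+u) = i" and ul: "u < 2*k+1" by auto
      have "even u"
      proof (rule ccontr)
        assume "odd u" then have "even (v+u)" using True by simp
        then show False using g i G2[of k "v+u"] by simp
      qed
      moreover have "u \<noteq> w"
      proof
        assume uw: "u = w"
        show False
        proof (cases "i = 1")
          case True
          then have "u = 2*k" using uw w_def by simp
          moreover have "v \<ge> 1" using \<open>odd v\<close> by (cases v) auto
          ultimately have "G k (v+u) = 3" using \<open>odd v\<close> by (intro G3) auto
          then show False using g True by simp
        next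
          case False
          then have "u = 0" "i = 3" using uw w_def i by auto
          moreover have "v < 2*k" using \<open>odd v\<close> v by presburger
          ultimately have "G k (v+u) = 1" using \<open>odd v\<close> by (intro G1) auto
          then show False using g \<open>i = 3\<close> by simp
        qed
      qed
      ultimately show "u \<in> {u\<in>?V. even u} - {w}" using ul by simp
    qed
    then have "card {u\<in>?V - {v}. G k (v+u) = i} \<le> card ({u\<in>?V. even u} - {w})"
      by (intro card_mono) auto
    also have "\<dots> = k"
    proof -
      have "w \<in> {u\<in>?V. even u}" unfolding w_def by auto
      then show ?thesis using card_even[of k] by (simp add: card_Diff_singleton)
    qed
    finally show ?thesis using cd_eq[OF v] by simp
  next
    case False
    have "{u\<in>?V - {v}. G k (v+u) = i} \<subseteq> {u\<in>?V. odd u}"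
    proof
      fix u assume u: "u \<in> {u\<in>?V - {v}. G k (v+u) = i}"
      then have g: "G k (v+u) = i" and ul: "u < 2*k+1" by auto
      have "odd u"
      proof (rule ccontr)
        assume "\<not> odd u" then have "even (v+u)" using False by simp
        then show False using g i G2[of k "v+u"] by simp
      qed
      then show "u \<in> {u\<in>?V. odd u}" using ul by simp
    qed
    then have "card {u\<in>?V - {v}. G k (v+u) = i} \<le> card {u\<in>?V. odd u}"
      by (intro card_mono) auto
    also have "\<dots> = k" using card_odd[of k] by simp
    finally show ?thesis using cd_eq[OF v] by simp
  qed
  have h3: "quasi_majority ?V ?E ?c"
    unfolding quasi_majority_def
  proof (intro ballI)
    fix v i assume v: "v \<in> ?V" and i: "i \<in> {1,2,3::nat}"
    then have v': "v < 2*k+1" by simp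
    have "i = 2 \<or> i = 1 \<or> i = 3" using i by auto
    then show "2 * color_deg ?E ?c i v \<le> degree ?E v + 1"
    proof (elim disjE)
      assume i2: "i = 2"
      have "color_deg ?E ?c 2 v \<le> k" using c2[OF v'] by (cases "odd v") auto
      then show ?thesis using i2 deg[OF v'] by simp
    next
      assume "i = 1" then show ?thesis using c13[OF v', of i] deg[OF v'] by simp
    next
      assume "i = 3" then show ?thesis using c13[OF v', of i] deg[OF v'] by simp
    qed
  qed
  have h4: "\<exists>S \<subseteq> ?V. card S = k \<and>
       (\<forall>v\<in>S. color_deg ?E ?c 2 v = k - 1) \<and>
       (\<forall>v\<in>?V - S. color_deg ?E ?c 2 v = k)"
  proof (rule exI[of _ "{u\<in>?V. odd u}"], intro conjI)
    show "{u\<in>?V. odd u} \<subseteq> ?V" by auto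
    show "card {u\<in>?V. odd u} = k" by (rule card_odd)
    show "\<forall>v\<in>{u\<in>?V. odd u}. color_deg ?E ?c 2 v = k - 1"
    proof
      fix v assume "v \<in> {u\<in>?V. odd u}"
      then have "v < 2*k+1" "odd v" by auto
      then show "color_deg ?E ?c 2 v = k - 1" using c2 by simp
    qed
    show "\<forall>v\<in>?V - {u\<in>?V. odd u}. color_deg ?E ?c 2 v = k"
    proof
      fix v assume "v \<in> ?V - {u\<in>?V. odd u}"
      then have "v < 2*k+1" "\<not> odd v" by auto
      then show "color_deg ?E ?c 2 v = k" using c2 by simp
    qed
  qed
  show ?thesis
    by (rule exI[of _ ?c]) (intro conjI h1 h2 h3 h4)
qed

end
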